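(* Let $b<-1$ and let $\lambda_1>0$ be a constant such that $(\mathcal{L}\eta,\eta)\ge\lambda_1\|\eta\|^2_{H^1_\alpha}$ for all $\eta\in H^1_\alpha$ with $\int\eta Q'\,dx=\int\eta\,SQ\,dx=0$. Then there exists $\theta>0$ such that every $\eta\in H^1_\alpha$ satisfying $$\Big|\Big(\eta,\frac{SQ}{\|SQ\|_{L^2}}\Big)\Big|+\Big|\Big(\eta,\frac{Q'}{\|Q'\|_{L^2}}\Big)\Big|\le\theta\|\eta\|_{H^1_\alpha}$$ obeys $(\mathcal{L}\eta,\eta)\ge\frac{3\lambda_1}{4}\|\eta\|^2_{H^1_\alpha}$.
   Context: Throughout, $b<-1$, $\nu=-\frac{b+1}{2}>0$. Fix $A>0$, $x_*\in\mathbb{R}$; the lefton is $Q(x)=A\frac{1-b}{2}(\cosh\nu(x-x_* ))^{b/\nu}$. Set $k=(A\frac{1-b}{2})^{\frac1b+1}$, $\alpha=Q^{-\frac1b-2}$. $H^1_\alpha$ is $H^1(\mathbb{R})$ with norm $\|f\|^2_{H^1_\alpha}=\int(f^2+f_x^2)\alpha\,dx$. $(f,g)=\int fg\,dx$ is the $L^2$ inner product. $SQ=\frac{2k(1-b)}{b}Q^{-\frac1b}+\frac{2(b-1)}{b}Q$. $(\mathcal{L}\eta,\eta)=\frac{2k}{b^2}\int\eta_x^2\alpha\,dx-\frac{2k(b+1)}{b}\int\eta^2\alpha\,dx$. *)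

theory Defs
  imports "HOL-Analysis.Analysis"
begin

definition nu :: "real \<Rightarrow> real" where
  "nu b = - (b + 1) / 2"

definition Qf :: "real \<Rightarrow> real \<Rightarrow> real \<Rightarrow> real \<Rightarrow> real" where
  "Qf b A xs x = A * (1 - b) / 2 * (cosh (nu b * (x - xs))) powr (b / nu b)"

definition kc :: "real \<Rightarrow> real \<Rightarrow> real" where
  "kc b A = (A * (1 - b) / 2) powr (1 / b + 1)"

definition alpha :: "real \<Rightarrow> real \<Rightarrow> real \<Rightarrow> real \<Rightarrow> real" where
  "alpha b A xs x = Qf b A xs x powr (- 1 / b - 2)"

definition SQ :: "real \<Rightarrow> real \<Rightarrow> real \<Rightarrow> real \<Rightarrow> real" where
  "SQ b A xs x = 2 * kc b A * (1 - b) / b * Qf b A xs x powr (- 1 / b)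
                 + 2 * (b - 1) / b * Qf b A xs x"

definition dQ :: "real \<Rightarrow> real \<Rightarrow> real \<Rightarrow> real \<Rightarrow> real" where
  "dQ b A xs x = deriv (Qf b A xs) x"

definition L2inner :: "(real \<Rightarrow> real) \<Rightarrow> (real \<Rightarrow> real) \<Rightarrow> real" where
  "L2inner f g = (\<integral>x. f x * g x \<partial>lborel)"

definition L2norm :: "(real \<Rightarrow> real) \<Rightarrow> real" where
  "L2norm f = sqrt (\<integral>x. (f x)\<^sup>2 \<partial>lborel)"

text \<open>An element of H^1_alpha is represented by a function f together with its weak
  derivative g: f is the absolutely continuous representative, i.e.
  f y - f x = integral of g over [x,y]; f, g in L^2 and the weighted norm is finite.\<close>
definition H1_alpha :: "real \<Rightarrow> real \<Rightarrow> real \<Rightarrow> (real \<Rightarrow> real) \<Rightarrow> (real \<Rightarrow> real) \<Rightarrow> bool" where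
  "H1_alpha b A xs f g \<longleftrightarrow>
     g \<in> borel_measurable lborel \<and>
     (\<forall>x y. x \<le> y \<longrightarrow> set_integrable lborel {x..y} g \<and>
                        f y - f x = (LINT t:{x..y}|lborel. g t)) \<and>
     integrable lborel (\<lambda>x. (f x)\<^sup>2) \<and> integrable lborel (\<lambda>x. (g x)\<^sup>2) \<and>
     integrable lborel (\<lambda>x. ((f x)\<^sup>2 + (g x)\<^sup>2) * alpha b A xs x)"

definition H1a_norm2 :: "real \<Rightarrow> real \<Rightarrow> real \<Rightarrow> (real \<Rightarrow> real) \<Rightarrow> (real \<Rightarrow> real) \<Rightarrow> real" where
  "H1a_norm2 b A xs f g = (\<integral>x. ((f x)\<^sup>2 + (g x)\<^sup>2) * alpha b A xs x \<partial>lborel)"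

definition Lform :: "real \<Rightarrow> real \<Rightarrow> real \<Rightarrow> (real \<Rightarrow> real) \<Rightarrow> (real \<Rightarrow> real) \<Rightarrow> real" where
  "Lform b A xs f g =
     2 * kc b A / b\<^sup>2 * (\<integral>x. (g x)\<^sup>2 * alpha b A xs x \<partial>lborel)
     - 2 * kc b A * (b + 1) / b * (\<integral>x. (f x)\<^sup>2 * alpha b A xs x \<partial>lborel)"

end

theory Submission
  imports Defs
begin

lemma exp_abs_integrable:
  fixes a :: real assumes a: "a > 0"
  shows "integrable lborel (\<lambda>x. exp (- a * \<bar>x\<bar>))"
proof -
  have h1: "((\<lambda>x. exp (-a*x)) has_integral exp (-a*0)/a) {0..}"
    by (rule has_integral_exp_minus_to_infinity[OF a])
  then have "(\<lambda>x. exp (-a*x)) integrable_on {0..}" by auto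
  then have "(\<lambda>x. exp (-a*x)) absolutely_integrable_on {0..}"
    by (rule nonnegative_absolutely_integrable_1) auto
  then have "integrable lebesgue (\<lambda>x. indicator {0..} x *\<^sub>R exp (-a*x))"
    by (simp add: set_integrable_def)
  then have h: "integrable lborel (\<lambda>x. indicator {0..} x *\<^sub>R exp (-a*x))"
    by (subst (asm) integrable_completion) auto
  have hm: "integrable lborel (\<lambda>x. indicator {0..} (0 + (-1) * x) *\<^sub>R exp (-a*(0 + (-1) * x)))"
    by (rule lborel_integrable_real_affine[OF h]) auto
  have "integrable lborel (\<lambda>x. indicator {0..} x *\<^sub>R exp (-a*x) + indicator {0..} (0 + (-1) * x) *\<^sub>R exp (-a*(0 + (-1) * x)))"
    using h hm by auto
  then show ?thesis
    by (rule Bochner_Integration.integrable_bound) (auto split: split_indicator)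
qed

lemma cosh_ge_exp_abs: "exp \<bar>y::real\<bar> / 2 \<le> cosh y"
  unfolding cosh_def by (cases "y \<ge> 0") (auto simp: add_pos_pos)

lemma meas_cosh_powr: "(\<lambda>x. cosh (n * (x - xs)) powr (c::real)) \<in> borel_measurable lborel"
proof -
  have "continuous_on UNIV (\<lambda>x. cosh (n * (x - xs)) powr (c::real))"
    by (intro continuous_intros) (auto simp: cosh_real_pos)
  then show ?thesis using borel_measurable_continuous_onI by simp
qed

lemma cosh_powr_integrable:
  fixes n c xs :: real assumes n: "n > 0" and c: "c > 0"
  shows "integrable lborel (\<lambda>x. cosh (n * (x - xs)) powr (- c))"
proof -
  have "integrable lborel (\<lambda>x. exp (- (c*n) * \<bar>(-xs) + 1 * x\<bar>))"
    by (rule lborel_integrable_real_affine[OF exp_abs_integrable]) (use n c in auto)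
  then have "integrable lborel (\<lambda>x. 2 powr c * exp (- (c*n) * \<bar>(-xs) + 1 * x\<bar>))"
    by auto
  then show ?thesis
  proof (rule Bochner_Integration.integrable_bound)
    show "(\<lambda>x. cosh (n * (x - xs)) powr (- c)) \<in> borel_measurable lborel" by (rule meas_cosh_powr)
    show "AE x in lborel. norm (cosh (n * (x - xs)) powr (- c)) \<le> norm (2 powr c * exp (- (c*n) * \<bar>(-xs) + 1 * x\<bar>))"
    proof (rule AE_I2)
      fix x
      let ?y = "n * (x - xs)"
      have "cosh ?y powr (- c) \<le> (exp \<bar>?y\<bar> / 2) powr (-c)"
        by (rule powr_mono2') (use c cosh_ge_exp_abs in auto)
      also have "\<dots> = exp \<bar>?y\<bar> powr (-c) / 2 powr (-c)"
        by (simp add: powr_divide)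
      also have "\<dots> = 2 powr c * exp (- (c*n) * \<bar>(-xs) + 1 * x\<bar>)"
      proof -
        have "\<bar>?y\<bar> = n * \<bar>x - xs\<bar>" using n by (simp add: abs_mult)
        then show ?thesis by (simp add: exp_powr_real powr_minus_divide exp_minus field_simps)
      qed
      finally show "norm (cosh (n * (x - xs)) powr (- c)) \<le> norm (2 powr c * exp (- (c*n) * \<bar>(-xs) + 1 * x\<bar>))"
        by simp
    qed
  qed
qed

lemma sq_cosh_int:
  fixes n r xs :: real assumes n: "n > 0" and r: "r < 0"
  shows "integrable lborel (\<lambda>x. (cosh (n * (x - xs)) powr r)\<^sup>2)"
proof -
  have "integrable lborel (\<lambda>x. cosh (n * (x - xs)) powr (- (-2*r)))"
    by (rule cosh_powr_integrable) (use n r in auto)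
  moreover have "(cosh (n * (x - xs)) powr r)\<^sup>2 = cosh (n * (x - xs)) powr (- (-2*r))" for x
    by (simp add: power2_eq_square powr_add[symmetric])
  ultimately show ?thesis by simp
qed

lemma sq_sum_le: "(u + v)\<^sup>2 \<le> 2 * u\<^sup>2 + 2 * (v::real)\<^sup>2"
proof -
  have "0 \<le> (u - v)\<^sup>2" by simp
  then show ?thesis by (simp add: power2_diff power2_sum)
qed

lemma nu_pos: "b < -1 \<Longrightarrow> nu b > 0" by (simp add: nu_def)

lemma Qf_eq: "Qf b A xs = (\<lambda>x. (A * (1 - b) / 2) * cosh (nu b * (x - xs)) powr (b / nu b))"
  by (simp add: Qf_def fun_eq_iff)

lemma Qf_pos: "b < -1 \<Longrightarrow> A > 0 \<Longrightarrow> Qf b A xs x > 0"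
  by (simp add: Qf_def cosh_real_pos)

lemma cont_Qf: "continuous_on UNIV (Qf b A xs)"
  unfolding Qf_eq by (intro continuous_intros) (auto simp: cosh_real_pos)

lemma meas_Qf[measurable]: "Qf b A xs \<in> borel_measurable lborel"
  using borel_measurable_continuous_onI[OF cont_Qf] by simp

lemma meas_alpha: "alpha b A xs \<in> borel_measurable lborel"
  unfolding alpha_def by measurable

lemma alpha_nonneg: "alpha b A xs x \<ge> 0"
  by (simp add: alpha_def)

lemma meas_SQ: "SQ b A xs \<in> borel_measurable lborel"
proof -
  have "(\<lambda>x. SQ b A xs x) \<in> borel_measurable lborel"
    unfolding SQ_def by measurable
  then show ?thesis by simp
qed

lemma SQ_sq_int:
  assumes hb: "b < -1" and hA: "A > 0"
  shows "integrable lborel (\<lambda>x. (SQ b A xs x)\<^sup>2)"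
proof -
  define Q0 where "Q0 = A * (1 - b) / 2"
  define C where "C = (\<lambda>x. cosh (nu b * (x - xs)))"
  define c3 where "c3 = 2 * kc b A * (1 - b) / b"
  define c4 where "c4 = 2 * (b - 1) / b"
  have Q0: "Q0 > 0" using hb hA by (simp add: Q0_def)
  have Cp: "C x > 0" for x by (simp add: C_def cosh_real_pos)
  have nu: "nu b > 0" using hb by (rule nu_pos)
  have Q: "Qf b A xs x = Q0 * C x powr (b / nu b)" for x by (simp add: Qf_def Q0_def C_def)
  have Qp: "Qf b A xs x powr (-1/b) = Q0 powr (-1/b) * C x powr (-1 / nu b)" for x
    using Q0 Cp hb nu by (simp add: Q powr_mult powr_powr)
  have SQe: "SQ b A xs x = c3 * Q0 powr (-1/b) * C x powr (-1 / nu b) + c4 * Q0 * C x powr (b / nu b)" for x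
    by (simp only: SQ_def Qp) (simp add: Q c3_def c4_def)
  have i1: "integrable lborel (\<lambda>x. (C x powr (-1 / nu b))\<^sup>2)"
    unfolding C_def by (rule sq_cosh_int) (use nu in auto)
  have i2: "integrable lborel (\<lambda>x. (C x powr (b / nu b))\<^sup>2)"
    unfolding C_def by (rule sq_cosh_int) (use nu hb in \<open>auto simp: divide_neg_pos\<close>)
  have "integrable lborel (\<lambda>x. 2 * (c3 * Q0 powr (-1/b))\<^sup>2 * (C x powr (-1 / nu b))\<^sup>2 + 2 * (c4 * Q0)\<^sup>2 * (C x powr (b / nu b))\<^sup>2)"
    using i1 i2 by auto
  then show ?thesis
  proof (rule Bochner_Integration.integrable_bound)
    show "(\<lambda>x. (SQ b A xs x)\<^sup>2) \<in> borel_measurable lborel" using meas_SQ by measurable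
    show "AE x in lborel. norm ((SQ b A xs x)\<^sup>2) \<le> norm (2 * (c3 * Q0 powr (-1/b))\<^sup>2 * (C x powr (-1 / nu b))\<^sup>2 + 2 * (c4 * Q0)\<^sup>2 * (C x powr (b / nu b))\<^sup>2)"
    proof (rule AE_I2)
      fix x
      note sq_sum_le[of "c3 * Q0 powr (-1/b) * C x powr (-1/nu b)" "c4*Q0*C x powr (b/nu b)"]
      then show "norm ((SQ b A xs x)\<^sup>2) \<le> norm (2 * (c3 * Q0 powr (-1/b))\<^sup>2 * (C x powr (-1 / nu b))\<^sup>2 + 2 * (c4 * Q0)\<^sup>2 * (C x powr (b / nu b))\<^sup>2)"
        by (simp add: SQe power_mult_distrib mult.assoc)
    qed
  qed
qed

lemma dQ_eq:
  assumes hb: "b < -1" and hA: "A > 0"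
  shows "dQ b A xs x = (A * (1 - b) / 2) * ((b / nu b) * cosh (nu b * (x - xs)) powr (b / nu b - 1) * (sinh (nu b * (x - xs)) * nu b))"
proof -
  have "(Qf b A xs has_real_derivative (A * (1 - b) / 2) * ((b / nu b) * cosh (nu b * (x - xs)) powr (b / nu b - 1) * (sinh (nu b * (x - xs)) * nu b))) (at x)"
    unfolding Qf_eq
    by (auto intro!: derivative_eq_intros simp: cosh_real_pos)
  then show ?thesis unfolding dQ_def by (rule DERIV_imp_deriv)
qed

lemma meas_dQ:
  assumes hb: "b < -1" and hA: "A > 0"
  shows "dQ b A xs \<in> borel_measurable lborel"
proof -
  have "continuous_on UNIV (\<lambda>x. (A * (1 - b) / 2) * ((b / nu b) * cosh (nu b * (x - xs)) powr (b / nu b - 1) * (sinh (nu b * (x - xs)) * nu b)))"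
    by (intro continuous_intros) (auto simp: cosh_real_pos)
  then have "(\<lambda>x. (A * (1 - b) / 2) * ((b / nu b) * cosh (nu b * (x - xs)) powr (b / nu b - 1) * (sinh (nu b * (x - xs)) * nu b))) \<in> borel_measurable lborel"
    using borel_measurable_continuous_onI by simp
  moreover have "dQ b A xs = (\<lambda>x. (A * (1 - b) / 2) * ((b / nu b) * cosh (nu b * (x - xs)) powr (b / nu b - 1) * (sinh (nu b * (x - xs)) * nu b)))"
    using dQ_eq[OF hb hA] by auto
  ultimately show ?thesis by simp
qed

lemma dQ_sq_int:
  assumes hb: "b < -1" and hA: "A > 0"
  shows "integrable lborel (\<lambda>x. (dQ b A xs x)\<^sup>2)"
proof -
  define K where "K = (A * (1 - b) / 2) * (b / nu b) * nu b"
  define C where "C = (\<lambda>x. cosh (nu b * (x - xs)))"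
  have nu: "nu b > 0" using hb by (rule nu_pos)
  have Cp: "C x > 0" for x by (simp add: C_def cosh_real_pos)
  have i2: "integrable lborel (\<lambda>x. (C x powr (b / nu b))\<^sup>2)"
    unfolding C_def by (rule sq_cosh_int) (use nu hb in \<open>auto simp: divide_neg_pos\<close>)
  then have "integrable lborel (\<lambda>x. K\<^sup>2 * (C x powr (b / nu b))\<^sup>2)" by auto
  then show ?thesis
  proof (rule Bochner_Integration.integrable_bound)
    show "(\<lambda>x. (dQ b A xs x)\<^sup>2) \<in> borel_measurable lborel" using meas_dQ[OF hb hA] by measurable
    show "AE x in lborel. norm ((dQ b A xs x)\<^sup>2) \<le> norm (K\<^sup>2 * (C x powr (b / nu b))\<^sup>2)"
    proof (rule AE_I2)
      fix x
      let ?s = "sinh (nu b * (x - xs))"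
      have d: "dQ b A xs x = K * (C x powr (b / nu b - 1) * ?s)"
        by (simp add: dQ_eq[OF hb hA] K_def C_def)
      have "\<bar>?s\<bar> \<le> C x" unfolding C_def
        using sinh_le_cosh_real[of "nu b * (x - xs)"] sinh_le_cosh_real[of "- (nu b * (x - xs))"]
        by (simp add: abs_le_iff)
      then have "\<bar>C x powr (b / nu b - 1) * ?s\<bar> \<le> C x powr (b / nu b - 1) * C x"
        by (simp add: abs_mult mult_left_mono)
      also have "\<dots> = C x powr (b / nu b)"
        using Cp[of x] by (simp add: powr_diff)
      finally have "\<bar>dQ b A xs x\<bar> \<le> \<bar>K\<bar> * C x powr (b / nu b)"
        by (simp add: d abs_mult mult_left_mono)
      then have "(dQ b A xs x)\<^sup>2 \<le> (\<bar>K\<bar> * C x powr (b / nu b))\<^sup>2"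
        by (metis abs_le_square_iff abs_of_nonneg abs_ge_zero order_trans)
      then show "norm ((dQ b A xs x)\<^sup>2) \<le> norm (K\<^sup>2 * (C x powr (b / nu b))\<^sup>2)"
        by (simp add: power_mult_distrib)
    qed
  qed
qed

lemma H1_cont:
  assumes H: "H1_alpha b A xs f g"
  shows "continuous_on UNIV f"
proof -
  have "isCont f x0" for x0
  proof -
    define a where "a = x0 - 1"
    define c where "c = x0 + 1"
    have si: "set_integrable lborel {a..c} g" using H a_def c_def by (simp add: H1_alpha_def)
    have gi: "g integrable_on {a..c}" using set_borel_integral_eq_integral(1)[OF si] .
    have eq: "f y = f a + integral {a..y} g" if "y \<in> {a..c}" for y
    proof -
      have "set_integrable lborel {a..y} g \<and> f y - f a = (LINT t:{a..y}|lborel. g t)"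
        using H that by (simp add: H1_alpha_def)
      then show ?thesis using set_borel_integral_eq_integral(2) by fastforce
    qed
    have ca: "continuous_on {a..c} (\<lambda>y. f a + integral {a..y} g)"
    proof -
      have c1: "continuous_on {a..c} (\<lambda>y. integral {a..y} g)"
        using gi by (rule indefinite_integral_continuous_1)
      show ?thesis by (intro continuous_on_add continuous_on_const c1)
    qed
    have "continuous_on {a..c} f"
    proof (rule continuous_on_eq[OF ca])
      fix y assume "y \<in> {a..c}"
      then show "f a + integral {a..y} g = f y" by (rule eq[symmetric])
    qed
    moreover have "x0 \<in> interior {a..c}" by (simp add: a_def c_def)
    ultimately show ?thesis by (rule continuous_on_interior)
  qed
  then show ?thesis by (simp add: continuous_at_imp_continuous_on)
qed

lemma H1_meas_f:
  "H1_alpha b A xs f g \<Longrightarrow> f \<in> borel_measurable lborel"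
  using borel_measurable_continuous_onI[OF H1_cont] by simp

lemma H1_meas_g:
  "H1_alpha b A xs f g \<Longrightarrow> g \<in> borel_measurable lborel"
  by (simp add: H1_alpha_def)

lemma prod_int:
  fixes f h :: "real \<Rightarrow> real"
  assumes "f \<in> borel_measurable lborel" "h \<in> borel_measurable lborel"
    "integrable lborel (\<lambda>x. (f x)\<^sup>2)" "integrable lborel (\<lambda>x. (h x)\<^sup>2)"
  shows "integrable lborel (\<lambda>x. f x * h x)"
proof -
  have "integrable lborel (\<lambda>x. (f x)\<^sup>2 + (h x)\<^sup>2)" using assms by auto
  then show ?thesis
  proof (rule Bochner_Integration.integrable_bound)
    show "(\<lambda>x. f x * h x) \<in> borel_measurable lborel" using assms by measurable
    show "AE x in lborel. norm (f x * h x) \<le> norm ((f x)\<^sup>2 + (h x)\<^sup>2)"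
    proof (rule AE_I2)
      fix x
      have "2 * \<bar>f x * h x\<bar> \<le> (f x)\<^sup>2 + (h x)\<^sup>2"
      proof -
        have "0 \<le> (\<bar>f x\<bar> - \<bar>h x\<bar>)\<^sup>2" by simp
        then show ?thesis by (simp add: power2_diff abs_mult)
      qed
      then show "norm (f x * h x) \<le> norm ((f x)\<^sup>2 + (h x)\<^sup>2)" by simp
    qed
  qed
qed

lemma H1_zero: "H1_alpha b A xs (\<lambda>_. 0) (\<lambda>_. 0)"
  by (simp add: H1_alpha_def set_integrable_def)

lemma sq_lin_le: "(a * u + c * v)\<^sup>2 \<le> 2 * a\<^sup>2 * u\<^sup>2 + 2 * c\<^sup>2 * (v::real)\<^sup>2"
  using sq_sum_le[of "a * u" "c * v"] by (simp add: power_mult_distrib)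

lemma H1_lin:
  assumes H1: "H1_alpha b A xs f1 g1" and H2: "H1_alpha b A xs f2 g2"
  shows "H1_alpha b A xs (\<lambda>x. a * f1 x + c * f2 x) (\<lambda>x. a * g1 x + c * g2 x)"
proof -
  note m = H1_meas_f[OF H1] H1_meas_f[OF H2] H1_meas_g[OF H1] H1_meas_g[OF H2] meas_alpha
  have gm: "(\<lambda>x. a * g1 x + c * g2 x) \<in> borel_measurable lborel" using m by measurable
  have iv: "set_integrable lborel {x..y} (\<lambda>x. a * g1 x + c * g2 x) \<and>
      (a * f1 y + c * f2 y) - (a * f1 x + c * f2 x) = (LINT t:{x..y}|lborel. a * g1 t + c * g2 t)"
    if "x \<le> y" for x y
  proof -
    have s1: "set_integrable lborel {x..y} g1" and e1: "f1 y - f1 x = (LINT t:{x..y}|lborel. g1 t)"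
      using H1 that by (auto simp: H1_alpha_def)
    have s2: "set_integrable lborel {x..y} g2" and e2: "f2 y - f2 x = (LINT t:{x..y}|lborel. g2 t)"
      using H2 that by (auto simp: H1_alpha_def)
    have s1': "set_integrable lborel {x..y} (\<lambda>t. a * g1 t)" using s1 by (rule set_integrable_mult_right)
    have s2': "set_integrable lborel {x..y} (\<lambda>t. c * g2 t)" using s2 by (rule set_integrable_mult_right)
    have "(LINT t:{x..y}|lborel. a * g1 t + c * g2 t) = (LINT t:{x..y}|lborel. a * g1 t) + (LINT t:{x..y}|lborel. c * g2 t)"
      by (rule set_integral_add(2)[OF s1' s2'])
    also have "\<dots> = a * (LINT t:{x..y}|lborel. g1 t) + c * (LINT t:{x..y}|lborel. g2 t)"
      by (simp add: set_integral_mult_right)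
    finally show ?thesis using set_integral_add(1)[OF s1' s2'] e1 e2 by (simp add: algebra_simps)
  qed
  have i1: "integrable lborel (\<lambda>x. (a * f1 x + c * f2 x)\<^sup>2)"
  proof -
    have "integrable lborel (\<lambda>x. 2 * a\<^sup>2 * (f1 x)\<^sup>2 + 2 * c\<^sup>2 * (f2 x)\<^sup>2)"
      using H1 H2 by (auto simp: H1_alpha_def)
    then show ?thesis
    proof (rule Bochner_Integration.integrable_bound)
      show "(\<lambda>x. (a * f1 x + c * f2 x)\<^sup>2) \<in> borel_measurable lborel" using m by measurable
      show "AE x in lborel. norm ((a * f1 x + c * f2 x)\<^sup>2) \<le> norm (2 * a\<^sup>2 * (f1 x)\<^sup>2 + 2 * c\<^sup>2 * (f2 x)\<^sup>2)"
        by (rule AE_I2) (use sq_lin_le[of a "f1 _" c "f2 _"] in simp)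
    qed
  qed
  have i2: "integrable lborel (\<lambda>x. (a * g1 x + c * g2 x)\<^sup>2)"
  proof -
    have "integrable lborel (\<lambda>x. 2 * a\<^sup>2 * (g1 x)\<^sup>2 + 2 * c\<^sup>2 * (g2 x)\<^sup>2)"
      using H1 H2 by (auto simp: H1_alpha_def)
    then show ?thesis
    proof (rule Bochner_Integration.integrable_bound)
      show "(\<lambda>x. (a * g1 x + c * g2 x)\<^sup>2) \<in> borel_measurable lborel" using m by measurable
      show "AE x in lborel. norm ((a * g1 x + c * g2 x)\<^sup>2) \<le> norm (2 * a\<^sup>2 * (g1 x)\<^sup>2 + 2 * c\<^sup>2 * (g2 x)\<^sup>2)"
        by (rule AE_I2) (use sq_lin_le[of a "g1 _" c "g2 _"] in simp)
    qed
  qed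
  have i3: "integrable lborel (\<lambda>x. ((a * f1 x + c * f2 x)\<^sup>2 + (a * g1 x + c * g2 x)\<^sup>2) * alpha b A xs x)"
  proof -
    have "integrable lborel (\<lambda>x. 2 * a\<^sup>2 * (((f1 x)\<^sup>2 + (g1 x)\<^sup>2) * alpha b A xs x) + 2 * c\<^sup>2 * (((f2 x)\<^sup>2 + (g2 x)\<^sup>2) * alpha b A xs x))"
      using H1 H2 by (auto simp: H1_alpha_def)
    then show ?thesis
    proof (rule Bochner_Integration.integrable_bound)
      show "(\<lambda>x. ((a * f1 x + c * f2 x)\<^sup>2 + (a * g1 x + c * g2 x)\<^sup>2) * alpha b A xs x) \<in> borel_measurable lborel"
        using m by measurable
      show "AE x in lborel. norm (((a * f1 x + c * f2 x)\<^sup>2 + (a * g1 x + c * g2 x)\<^sup>2) * alpha b A xs x) \<le>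
         norm (2 * a\<^sup>2 * (((f1 x)\<^sup>2 + (g1 x)\<^sup>2) * alpha b A xs x) + 2 * c\<^sup>2 * (((f2 x)\<^sup>2 + (g2 x)\<^sup>2) * alpha b A xs x))"
      proof (rule AE_I2)
        fix x
        have al: "alpha b A xs x \<ge> 0" by (rule alpha_nonneg)
        have "((a * f1 x + c * f2 x)\<^sup>2 + (a * g1 x + c * g2 x)\<^sup>2) * alpha b A xs x \<le>
          (2 * a\<^sup>2 * (f1 x)\<^sup>2 + 2 * c\<^sup>2 * (f2 x)\<^sup>2 + (2 * a\<^sup>2 * (g1 x)\<^sup>2 + 2 * c\<^sup>2 * (g2 x)\<^sup>2)) * alpha b A xs x"
          by (rule mult_right_mono[OF add_mono[OF sq_lin_le sq_lin_le] al])
        also have "\<dots> = 2 * a\<^sup>2 * (((f1 x)\<^sup>2 + (g1 x)\<^sup>2) * alpha b A xs x) + 2 * c\<^sup>2 * (((f2 x)\<^sup>2 + (g2 x)\<^sup>2) * alpha b A xs x)"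
          by (simp add: algebra_simps)
        finally show "norm (((a * f1 x + c * f2 x)\<^sup>2 + (a * g1 x + c * g2 x)\<^sup>2) * alpha b A xs x) \<le>
         norm (2 * a\<^sup>2 * (((f1 x)\<^sup>2 + (g1 x)\<^sup>2) * alpha b A xs x) + 2 * c\<^sup>2 * (((f2 x)\<^sup>2 + (g2 x)\<^sup>2) * alpha b A xs x))"
          using al by simp
      qed
    qed
  qed
  show ?thesis unfolding H1_alpha_def
  proof (intro conjI allI impI)
    fix x y :: real assume "x \<le> y"
    then show "set_integrable lborel {x..y} (\<lambda>x. a * g1 x + c * g2 x)"
      "(a * f1 y + c * f2 y) - (a * f1 x + c * f2 x) = (LINT t:{x..y}|lborel. a * g1 t + c * g2 t)"
      using iv by auto
  qed (fact gm i1 i2 i3)+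
qed

lemma abs_sq_le: "\<bar>a::real\<bar> \<le> B \<Longrightarrow> a\<^sup>2 \<le> B\<^sup>2"
  by (metis abs_le_square_iff abs_ge_zero abs_of_nonneg order_trans)

lemma correction_abstract:
  fixes V :: "(real \<Rightarrow> real) \<Rightarrow> (real \<Rightarrow> real) \<Rightarrow> bool"
    and l1 l2 :: "(real \<Rightarrow> real) \<Rightarrow> real"
    and N :: "(real \<Rightarrow> real) \<Rightarrow> (real \<Rightarrow> real) \<Rightarrow> real"
  assumes lin: "\<And>f1 g1 f2 g2 a c. V f1 g1 \<Longrightarrow> V f2 g2 \<Longrightarrow> V (\<lambda>x. a * f1 x + c * f2 x) (\<lambda>x. a * g1 x + c * g2 x)"
    and l1lin: "\<And>f1 g1 f2 g2 a c. V f1 g1 \<Longrightarrow> V f2 g2 \<Longrightarrow> l1 (\<lambda>x. a * f1 x + c * f2 x) = a * l1 f1 + c * l1 f2"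
    and l2lin: "\<And>f1 g1 f2 g2 a c. V f1 g1 \<Longrightarrow> V f2 g2 \<Longrightarrow> l2 (\<lambda>x. a * f1 x + c * f2 x) = a * l2 f1 + c * l2 f2"
    and Nlin: "\<And>f1 g1 f2 g2 a c. V f1 g1 \<Longrightarrow> V f2 g2 \<Longrightarrow> N (\<lambda>x. a * f1 x + c * f2 x) (\<lambda>x. a * g1 x + c * g2 x) \<le> 2 * a\<^sup>2 * N f1 g1 + 2 * c\<^sup>2 * N f2 g2"
    and Npos: "\<And>f g. V f g \<Longrightarrow> N f g \<ge> 0"
    and V0: "V (\<lambda>_. 0) (\<lambda>_. 0)" and N0: "N (\<lambda>_. 0) (\<lambda>_. 0) = 0"
  shows "\<exists>K\<ge>0. \<forall>f g. V f g \<longrightarrow> (\<exists>fw gw. V fw gw \<and> l1 fw = l1 f \<and> l2 fw = l2 f \<and>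
            N fw gw \<le> K * (\<bar>l1 f\<bar> + \<bar>l2 f\<bar>)\<^sup>2)"
proof (cases "\<exists>p1 q1 p2 q2. V p1 q1 \<and> V p2 q2 \<and> l1 p1 * l2 p2 - l1 p2 * l2 p1 \<noteq> 0")
  case True
  then obtain p1 q1 p2 q2 where V1: "V p1 q1" and V2: "V p2 q2" and d0: "l1 p1 * l2 p2 - l1 p2 * l2 p1 \<noteq> 0"
    by blast
  define d where "d = l1 p1 * l2 p2 - l1 p2 * l2 p1"
  define m where "m = \<bar>l1 p1\<bar> + \<bar>l2 p1\<bar> + \<bar>l1 p2\<bar> + \<bar>l2 p2\<bar>"
  define K where "K = 2 * (m / d)\<^sup>2 * (N p1 q1 + N p2 q2)"
  have dnz: "d \<noteq> 0" using d0 by (simp add: d_def)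
  have K0: "K \<ge> 0" using Npos[OF V1] Npos[OF V2] by (simp add: K_def)
  show ?thesis
  proof (intro exI[of _ K] conjI K0 allI impI)
    fix f g assume Vf: "V f g"
    define S where "S = \<bar>l1 f\<bar> + \<bar>l2 f\<bar>"
    define a where "a = (l1 f * l2 p2 - l2 f * l1 p2) / d"
    define c where "c = (l2 f * l1 p1 - l1 f * l2 p1) / d"
    have ad: "a * d = l1 f * l2 p2 - l2 f * l1 p2" using dnz by (simp add: a_def)
    have cd: "c * d = l2 f * l1 p1 - l1 f * l2 p1" using dnz by (simp add: c_def)
    have "(a * l1 p1 + c * l1 p2) * d = l1 f * d"
    proof -
      have "(a * l1 p1 + c * l1 p2) * d = (a * d) * l1 p1 + (c * d) * l1 p2" by (simp add: algebra_simps)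
      also have "\<dots> = l1 f * d" unfolding ad cd by (simp add: d_def algebra_simps)
      finally show ?thesis .
    qed
    then have e1: "a * l1 p1 + c * l1 p2 = l1 f" using dnz by simp
    have "(a * l2 p1 + c * l2 p2) * d = l2 f * d"
    proof -
      have "(a * l2 p1 + c * l2 p2) * d = (a * d) * l2 p1 + (c * d) * l2 p2" by (simp add: algebra_simps)
      also have "\<dots> = l2 f * d" unfolding ad cd by (simp add: d_def algebra_simps)
      finally show ?thesis .
    qed
    then have e2: "a * l2 p1 + c * l2 p2 = l2 f" using dnz by simp
    have bnd: "\<bar>u * v - w * z\<bar> \<le> S * m" if "\<bar>u\<bar> + \<bar>w\<bar> = S"
      "\<bar>v\<bar> \<le> m" "\<bar>z\<bar> \<le> m" for u v w z
    proof -
      have "\<bar>u * v - w * z\<bar> \<le> \<bar>u\<bar> * \<bar>v\<bar> + \<bar>w\<bar> * \<bar>z\<bar>" by (simp add: abs_mult abs_triangle_ineq4[THEN order_trans])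
      also have "\<dots> \<le> \<bar>u\<bar> * m + \<bar>w\<bar> * m"
        using that by (intro add_mono mult_left_mono) auto
      also have "\<dots> = (\<bar>u\<bar> + \<bar>w\<bar>) * m"
        by (simp add: algebra_simps)
      also have "\<dots> = S * m" using that(1) by simp
      finally show ?thesis .
    qed
    have ma: "\<bar>l1 p1\<bar> \<le> m" "\<bar>l2 p1\<bar> \<le> m" "\<bar>l1 p2\<bar> \<le> m" "\<bar>l2 p2\<bar> \<le> m" by (auto simp: m_def)
    have "\<bar>l1 f * l2 p2 - l2 f * l1 p2\<bar> \<le> S * m" by (rule bnd) (use ma in \<open>auto simp: S_def\<close>)
    then have "\<bar>a\<bar> \<le> S * m / \<bar>d\<bar>" unfolding a_def abs_divide by (rule divide_right_mono) simp
    then have a2: "a\<^sup>2 \<le> (S * m / \<bar>d\<bar>)\<^sup>2" by (rule abs_sq_le)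
    have "\<bar>l2 f * l1 p1 - l1 f * l2 p1\<bar> \<le> S * m" by (rule bnd) (use ma in \<open>auto simp: S_def\<close>)
    then have "\<bar>c\<bar> \<le> S * m / \<bar>d\<bar>" unfolding c_def abs_divide by (rule divide_right_mono) simp
    then have c2: "c\<^sup>2 \<le> (S * m / \<bar>d\<bar>)\<^sup>2" by (rule abs_sq_le)
    have "N (\<lambda>x. a * p1 x + c * p2 x) (\<lambda>x. a * q1 x + c * q2 x) \<le> 2 * a\<^sup>2 * N p1 q1 + 2 * c\<^sup>2 * N p2 q2"
      by (rule Nlin[OF V1 V2])
    also have "\<dots> \<le> 2 * (S * m / \<bar>d\<bar>)\<^sup>2 * N p1 q1 + 2 * (S * m / \<bar>d\<bar>)\<^sup>2 * N p2 q2"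
      using a2 c2 Npos[OF V1] Npos[OF V2] by (intro add_mono mult_right_mono) auto
    also have "\<dots> = K * S\<^sup>2"
      by (simp add: K_def power_divide power_mult_distrib algebra_simps add_divide_distrib)
    finally have Nb: "N (\<lambda>x. a * p1 x + c * p2 x) (\<lambda>x. a * q1 x + c * q2 x) \<le> K * S\<^sup>2" .
    show "\<exists>fw gw. V fw gw \<and> l1 fw = l1 f \<and> l2 fw = l2 f \<and> N fw gw \<le> K * (\<bar>l1 f\<bar> + \<bar>l2 f\<bar>)\<^sup>2"
      apply (rule exI[of _ "\<lambda>x. a * p1 x + c * p2 x"], rule exI[of _ "\<lambda>x. a * q1 x + c * q2 x"])
      using lin[OF V1 V2] l1lin[OF V1 V2] l2lin[OF V1 V2] e1 e2 Nb by (simp add: S_def)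
  qed
next
  case nA: False
  show ?thesis
  proof (cases "\<exists>p q. V p q \<and> (l1 p \<noteq> 0 \<or> l2 p \<noteq> 0)")
    case True
    then obtain p q where Vp: "V p q" and nz: "l1 p \<noteq> 0 \<or> l2 p \<noteq> 0" by blast
    define r where "r = (l1 p)\<^sup>2 + (l2 p)\<^sup>2"
    define m where "m = \<bar>l1 p\<bar> + \<bar>l2 p\<bar>"
    define K where "K = 2 * (m / r)\<^sup>2 * N p q"
    have r0: "r > 0" using nz by (auto simp: r_def add_pos_nonneg add_nonneg_pos)
    have K0: "K \<ge> 0" using Npos[OF Vp] by (simp add: K_def)
    show ?thesis
    proof (intro exI[of _ K] conjI K0 allI impI)
      fix f g assume Vf: "V f g"
      define S where "S = \<bar>l1 f\<bar> + \<bar>l2 f\<bar>"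
      have nA': "\<And>p1 q1 p2 q2. V p1 q1 \<Longrightarrow> V p2 q2 \<Longrightarrow> l1 p1 * l2 p2 - l1 p2 * l2 p1 = 0"
        using nA by blast
      have det: "l1 p * l2 f - l1 f * l2 p = 0" by (rule nA'[OF Vp Vf])
      define s where "s = (l1 f * l1 p + l2 f * l2 p) / r"
      have det': "l1 p * l2 f = l1 f * l2 p" using det by simp
      have sr: "s * r = l1 f * l1 p + l2 f * l2 p" using r0 by (simp add: s_def)
      have "s * l1 p * r = l1 f * r"
      proof -
        have "s * l1 p * r = (s * r) * l1 p" by simp
        also have "\<dots> = l1 f * (l1 p)\<^sup>2 + l2 p * (l1 p * l2 f)" unfolding sr by (simp add: algebra_simps power2_eq_square)
        also have "\<dots> = l1 f * (l1 p)\<^sup>2 + l2 p * (l1 f * l2 p)" by (simp only: det')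
        also have "\<dots> = l1 f * r" by (simp add: r_def algebra_simps power2_eq_square)
        finally show ?thesis .
      qed
      then have e1: "s * l1 p + 0 * l1 p = l1 f" using r0 by simp
      have "s * l2 p * r = l2 f * r"
      proof -
        have "s * l2 p * r = (s * r) * l2 p" by simp
        also have "\<dots> = l1 p * (l1 f * l2 p) + l2 f * (l2 p)\<^sup>2" unfolding sr by (simp add: algebra_simps power2_eq_square)
        also have "\<dots> = l1 p * (l1 p * l2 f) + l2 f * (l2 p)\<^sup>2" by (simp only: det')
        also have "\<dots> = l2 f * r" by (simp add: r_def algebra_simps power2_eq_square)
        finally show ?thesis .
      qed
      then have e2: "s * l2 p + 0 * l2 p = l2 f" using r0 by simp
      have "\<bar>l1 f * l1 p + l2 f * l2 p\<bar> \<le> S * m"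
      proof -
        have "\<bar>l1 f * l1 p + l2 f * l2 p\<bar> \<le> \<bar>l1 f\<bar> * \<bar>l1 p\<bar> + \<bar>l2 f\<bar> * \<bar>l2 p\<bar>"
          by (metis abs_mult abs_triangle_ineq)
        also have "\<dots> \<le> S * m" by (simp add: S_def m_def algebra_simps)
        finally show ?thesis .
      qed
      then have "\<bar>s\<bar> \<le> S * m / r" unfolding s_def abs_divide using r0 by (simp add: divide_right_mono)
      then have s2: "s\<^sup>2 \<le> (S * m / r)\<^sup>2" by (rule abs_sq_le)
      have "N (\<lambda>x. s * p x + 0 * p x) (\<lambda>x. s * q x + 0 * q x) \<le> 2 * s\<^sup>2 * N p q + 2 * 0\<^sup>2 * N p q"
        by (rule Nlin[OF Vp Vp])
      also have "\<dots> \<le> 2 * (S * m / r)\<^sup>2 * N p q"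
        using s2 Npos[OF Vp] by (simp add: mult_right_mono)
      also have "\<dots> = K * S\<^sup>2"
        by (simp add: K_def power_divide power_mult_distrib algebra_simps)
      finally have Nb: "N (\<lambda>x. s * p x + 0 * p x) (\<lambda>x. s * q x + 0 * q x) \<le> K * S\<^sup>2" .
      show "\<exists>fw gw. V fw gw \<and> l1 fw = l1 f \<and> l2 fw = l2 f \<and> N fw gw \<le> K * (\<bar>l1 f\<bar> + \<bar>l2 f\<bar>)\<^sup>2"
        apply (rule exI[of _ "\<lambda>x. s * p x + 0 * p x"], rule exI[of _ "\<lambda>x. s * q x + 0 * q x"])
        using lin[OF Vp Vp] l1lin[OF Vp Vp] l2lin[OF Vp Vp] e1 e2 Nb
        by (simp only: S_def)
    qed
  next
    case False
    then have z: "V f g \<Longrightarrow> l1 f = 0 \<and> l2 f = 0" for f g by blast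
    show ?thesis
    proof (intro exI[of _ 0] conjI allI impI order_refl)
      fix f g assume "V f g"
      then show "\<exists>fw gw. V fw gw \<and> l1 fw = l1 f \<and> l2 fw = l2 f \<and> N fw gw \<le> 0 * (\<bar>l1 f\<bar> + \<bar>l2 f\<bar>)\<^sup>2"
        using z[OF V0] z[of f g] V0 N0 by (intro exI[of _ "\<lambda>_. 0"]) auto
    qed
  qed
qed

lemma lo_pt:
  fixes t u v :: real assumes t: "t > 0"
  shows "(1 - t) * u\<^sup>2 + (1 - 1/t) * v\<^sup>2 \<le> (u + v)\<^sup>2"
proof -
  have e: "(u + v)\<^sup>2 - ((1 - t) * u\<^sup>2 + (1 - 1/t) * v\<^sup>2) = (t * u + v)\<^sup>2 / t"
    using t by (simp add: field_simps power2_eq_square)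
  have "(t * u + v)\<^sup>2 / t \<ge> 0" using t by simp
  then show ?thesis using e by linarith
qed

lemma hi_pt:
  fixes t u v :: real assumes t: "t > 0"
  shows "(u + v)\<^sup>2 \<le> (1 + t) * u\<^sup>2 + (1 + 1/t) * v\<^sup>2"
proof -
  have e: "(1 + t) * u\<^sup>2 + (1 + 1/t) * v\<^sup>2 - (u + v)\<^sup>2 = (t * u - v)\<^sup>2 / t"
    using t by (simp add: field_simps power2_eq_square)
  have "(t * u - v)\<^sup>2 / t \<ge> 0" using t by simp
  then show ?thesis using e by linarith
qed

lemma int_lo:
  fixes t :: real and u v h w :: "real \<Rightarrow> real"
  assumes t: "t > 0" and iu: "integrable lborel (\<lambda>x. (u x)\<^sup>2 * w x)"
    and iv: "integrable lborel (\<lambda>x. (v x)\<^sup>2 * w x)" and ih: "integrable lborel (\<lambda>x. (h x)\<^sup>2 * w x)"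
    and h: "\<And>x. h x = u x + v x" and w: "\<And>x. w x \<ge> 0"
  shows "(1 - t) * (\<integral>x. (u x)\<^sup>2 * w x \<partial>lborel) + (1 - 1/t) * (\<integral>x. (v x)\<^sup>2 * w x \<partial>lborel)
          \<le> (\<integral>x. (h x)\<^sup>2 * w x \<partial>lborel)"
proof -
  have "(1 - t) * (\<integral>x. (u x)\<^sup>2 * w x \<partial>lborel) + (1 - 1/t) * (\<integral>x. (v x)\<^sup>2 * w x \<partial>lborel)
      = (\<integral>x. (1 - t) * ((u x)\<^sup>2 * w x) + (1 - 1/t) * ((v x)\<^sup>2 * w x) \<partial>lborel)"
    using iu iv by simp
  also have "\<dots> \<le> (\<integral>x. (h x)\<^sup>2 * w x \<partial>lborel)"
  proof (rule integral_mono)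
    show "integrable lborel (\<lambda>x. (1 - t) * ((u x)\<^sup>2 * w x) + (1 - 1/t) * ((v x)\<^sup>2 * w x))"
      using iu iv by simp
    show "integrable lborel (\<lambda>x. (h x)\<^sup>2 * w x)" by (rule ih)
    fix x
    have "((1 - t) * (u x)\<^sup>2 + (1 - 1/t) * (v x)\<^sup>2) * w x \<le> (h x)\<^sup>2 * w x"
      unfolding h by (rule mult_right_mono[OF lo_pt[OF t] w])
    then show "(1 - t) * ((u x)\<^sup>2 * w x) + (1 - 1/t) * ((v x)\<^sup>2 * w x) \<le> (h x)\<^sup>2 * w x"
      by (simp add: algebra_simps)
  qed
  finally show ?thesis .
qed

lemma int_hi:
  fixes t :: real and u v h w :: "real \<Rightarrow> real"
  assumes t: "t > 0" and iu: "integrable lborel (\<lambda>x. (u x)\<^sup>2 * w x)"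
    and iv: "integrable lborel (\<lambda>x. (v x)\<^sup>2 * w x)" and ih: "integrable lborel (\<lambda>x. (h x)\<^sup>2 * w x)"
    and h: "\<And>x. h x = u x + v x" and w: "\<And>x. w x \<ge> 0"
  shows "(\<integral>x. (h x)\<^sup>2 * w x \<partial>lborel) \<le>
     (1 + t) * (\<integral>x. (u x)\<^sup>2 * w x \<partial>lborel) + (1 + 1/t) * (\<integral>x. (v x)\<^sup>2 * w x \<partial>lborel)"
proof -
  have "(\<integral>x. (h x)\<^sup>2 * w x \<partial>lborel) \<le> (\<integral>x. (1 + t) * ((u x)\<^sup>2 * w x) + (1 + 1/t) * ((v x)\<^sup>2 * w x) \<partial>lborel)"
  proof (rule integral_mono)
    show "integrable lborel (\<lambda>x. (1 + t) * ((u x)\<^sup>2 * w x) + (1 + 1/t) * ((v x)\<^sup>2 * w x))"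
      using iu iv by simp
    show "integrable lborel (\<lambda>x. (h x)\<^sup>2 * w x)" by (rule ih)
    fix x
    have "(h x)\<^sup>2 * w x \<le> ((1 + t) * (u x)\<^sup>2 + (1 + 1/t) * (v x)\<^sup>2) * w x"
      unfolding h by (rule mult_right_mono[OF hi_pt[OF t] w])
    then show "(h x)\<^sup>2 * w x \<le> (1 + t) * ((u x)\<^sup>2 * w x) + (1 + 1/t) * ((v x)\<^sup>2 * w x)"
      by (simp add: algebra_simps)
  qed
  also have "\<dots> = (1 + t) * (\<integral>x. (u x)\<^sup>2 * w x \<partial>lborel) + (1 + 1/t) * (\<integral>x. (v x)\<^sup>2 * w x \<partial>lborel)"
    using iu iv by simp
  finally show ?thesis .
qed

lemma N_split:
  assumes H: "H1_alpha b A xs f g"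
  shows "integrable lborel (\<lambda>x. (f x)\<^sup>2 * alpha b A xs x)"
    "integrable lborel (\<lambda>x. (g x)\<^sup>2 * alpha b A xs x)"
    "H1a_norm2 b A xs f g = (\<integral>x. (f x)\<^sup>2 * alpha b A xs x \<partial>lborel) + (\<integral>x. (g x)\<^sup>2 * alpha b A xs x \<partial>lborel)"
proof -
  note m = H1_meas_f[OF H] H1_meas_g[OF H] meas_alpha
  have I: "integrable lborel (\<lambda>x. ((f x)\<^sup>2 + (g x)\<^sup>2) * alpha b A xs x)" using H by (simp add: H1_alpha_def)
  show i1: "integrable lborel (\<lambda>x. (f x)\<^sup>2 * alpha b A xs x)"
    using I
  proof (rule Bochner_Integration.integrable_bound)
    show "(\<lambda>x. (f x)\<^sup>2 * alpha b A xs x) \<in> borel_measurable lborel" using m by measurable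
    show "AE x in lborel. norm ((f x)\<^sup>2 * alpha b A xs x) \<le> norm (((f x)\<^sup>2 + (g x)\<^sup>2) * alpha b A xs x)"
      by (rule AE_I2) (use alpha_nonneg[of b A xs] in \<open>auto simp: abs_mult intro!: mult_right_mono\<close>)
  qed
  show i2: "integrable lborel (\<lambda>x. (g x)\<^sup>2 * alpha b A xs x)"
    using I
  proof (rule Bochner_Integration.integrable_bound)
    show "(\<lambda>x. (g x)\<^sup>2 * alpha b A xs x) \<in> borel_measurable lborel" using m by measurable
    show "AE x in lborel. norm ((g x)\<^sup>2 * alpha b A xs x) \<le> norm (((f x)\<^sup>2 + (g x)\<^sup>2) * alpha b A xs x)"
      by (rule AE_I2) (use alpha_nonneg[of b A xs] in \<open>auto simp: abs_mult intro!: mult_right_mono\<close>)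
  qed
  have "H1a_norm2 b A xs f g = (\<integral>x. (f x)\<^sup>2 * alpha b A xs x + (g x)\<^sup>2 * alpha b A xs x \<partial>lborel)"
    unfolding H1a_norm2_def by (simp add: algebra_simps)
  also have "\<dots> = (\<integral>x. (f x)\<^sup>2 * alpha b A xs x \<partial>lborel) + (\<integral>x. (g x)\<^sup>2 * alpha b A xs x \<partial>lborel)"
    using i1 i2 by simp
  finally show "H1a_norm2 b A xs f g = (\<integral>x. (f x)\<^sup>2 * alpha b A xs x \<partial>lborel) + (\<integral>x. (g x)\<^sup>2 * alpha b A xs x \<partial>lborel)" .
qed

lemma N_pos: "H1a_norm2 b A xs f g \<ge> 0"
  unfolding H1a_norm2_def by (rule integral_nonneg_AE) (use alpha_nonneg[of b A xs] in auto)

lemma N_lin: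
  assumes H1: "H1_alpha b A xs f1 g1" and H2: "H1_alpha b A xs f2 g2"
  shows "H1a_norm2 b A xs (\<lambda>x. a * f1 x + c * f2 x) (\<lambda>x. a * g1 x + c * g2 x)
     \<le> 2 * a\<^sup>2 * H1a_norm2 b A xs f1 g1 + 2 * c\<^sup>2 * H1a_norm2 b A xs f2 g2"
proof -
  have I1: "integrable lborel (\<lambda>x. ((f1 x)\<^sup>2 + (g1 x)\<^sup>2) * alpha b A xs x)" using H1 by (simp add: H1_alpha_def)
  have I2: "integrable lborel (\<lambda>x. ((f2 x)\<^sup>2 + (g2 x)\<^sup>2) * alpha b A xs x)" using H2 by (simp add: H1_alpha_def)
  have I3: "integrable lborel (\<lambda>x. ((a * f1 x + c * f2 x)\<^sup>2 + (a * g1 x + c * g2 x)\<^sup>2) * alpha b A xs x)"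
    using H1_lin[OF H1 H2, of a c] by (simp add: H1_alpha_def)
  have "H1a_norm2 b A xs (\<lambda>x. a * f1 x + c * f2 x) (\<lambda>x. a * g1 x + c * g2 x) \<le>
     (\<integral>x. 2 * a\<^sup>2 * (((f1 x)\<^sup>2 + (g1 x)\<^sup>2) * alpha b A xs x) + 2 * c\<^sup>2 * (((f2 x)\<^sup>2 + (g2 x)\<^sup>2) * alpha b A xs x) \<partial>lborel)"
    unfolding H1a_norm2_def
  proof (rule integral_mono)
    show "integrable lborel (\<lambda>x. 2 * a\<^sup>2 * (((f1 x)\<^sup>2 + (g1 x)\<^sup>2) * alpha b A xs x) + 2 * c\<^sup>2 * (((f2 x)\<^sup>2 + (g2 x)\<^sup>2) * alpha b A xs x))"
      using I1 I2 by simp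
    show "integrable lborel (\<lambda>x. ((a * f1 x + c * f2 x)\<^sup>2 + (a * g1 x + c * g2 x)\<^sup>2) * alpha b A xs x)" by (rule I3)
    fix x
    have al: "alpha b A xs x \<ge> 0" by (rule alpha_nonneg)
    have "((a * f1 x + c * f2 x)\<^sup>2 + (a * g1 x + c * g2 x)\<^sup>2) * alpha b A xs x \<le>
      (2 * a\<^sup>2 * (f1 x)\<^sup>2 + 2 * c\<^sup>2 * (f2 x)\<^sup>2 + (2 * a\<^sup>2 * (g1 x)\<^sup>2 + 2 * c\<^sup>2 * (g2 x)\<^sup>2)) * alpha b A xs x"
      by (rule mult_right_mono[OF add_mono[OF sq_lin_le sq_lin_le] al])
    also have "\<dots> = 2 * a\<^sup>2 * (((f1 x)\<^sup>2 + (g1 x)\<^sup>2) * alpha b A xs x) + 2 * c\<^sup>2 * (((f2 x)\<^sup>2 + (g2 x)\<^sup>2) * alpha b A xs x)"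
      by (simp add: algebra_simps)
    finally show "((a * f1 x + c * f2 x)\<^sup>2 + (a * g1 x + c * g2 x)\<^sup>2) * alpha b A xs x \<le> 2 * a\<^sup>2 * (((f1 x)\<^sup>2 + (g1 x)\<^sup>2) * alpha b A xs x) + 2 * c\<^sup>2 * (((f2 x)\<^sup>2 + (g2 x)\<^sup>2) * alpha b A xs x)" .
  qed
  also have "\<dots> = 2 * a\<^sup>2 * H1a_norm2 b A xs f1 g1 + 2 * c\<^sup>2 * H1a_norm2 b A xs f2 g2"
    unfolding H1a_norm2_def using I1 I2 by simp
  finally show ?thesis .
qed

lemma L2inner_lin:
  assumes "integrable lborel (\<lambda>x. f1 x * h x)" "integrable lborel (\<lambda>x. f2 x * h x)"
  shows "L2inner (\<lambda>x. a * f1 x + c * f2 x) h = a * L2inner f1 h + c * L2inner f2 h"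
proof -
  have "L2inner (\<lambda>x. a * f1 x + c * f2 x) h = (\<integral>x. a * (f1 x * h x) + c * (f2 x * h x) \<partial>lborel)"
    unfolding L2inner_def by (simp add: algebra_simps)
  also have "\<dots> = a * L2inner f1 h + c * L2inner f2 h"
    unfolding L2inner_def using assms by simp
  finally show ?thesis .
qed

lemma l_int:
  assumes hb: "b < -1" and hA: "A > 0" and H: "H1_alpha b A xs f g"
  shows "integrable lborel (\<lambda>x. f x * dQ b A xs x)" "integrable lborel (\<lambda>x. f x * SQ b A xs x)"
proof -
  have fi: "integrable lborel (\<lambda>x. (f x)\<^sup>2)" using H by (simp add: H1_alpha_def)
  show "integrable lborel (\<lambda>x. f x * dQ b A xs x)"
    by (rule prod_int[OF H1_meas_f[OF H] meas_dQ[OF hb hA] fi dQ_sq_int[OF hb hA]])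
  show "integrable lborel (\<lambda>x. f x * SQ b A xs x)"
    by (rule prod_int[OF H1_meas_f[OF H] meas_SQ fi SQ_sq_int[OF hb hA]])
qed

lemma zero_norm:
  fixes f h :: "real \<Rightarrow> real"
  assumes hm: "h \<in> borel_measurable lborel" and hi: "integrable lborel (\<lambda>x. (h x)\<^sup>2)"
    and z: "L2norm h = 0"
  shows "L2inner f h = 0"
proof -
  have "(\<integral>x. (h x)\<^sup>2 \<partial>lborel) = 0" using z unfolding L2norm_def by simp
  then have "AE x in lborel. (h x)\<^sup>2 = 0"
    using integral_nonneg_eq_0_iff_AE[OF hi] by simp
  then have "AE x in lborel. f x * h x = 0" by auto
  then show ?thesis unfolding L2inner_def by (rule integral_eq_zero_AE)
qed

lemma final_arith:
  fixes lam c1 c2 t F G Fe Ge Fw Gw :: real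
  assumes lam: "lam > 0" and c1: "c1 \<ge> 0" and c2: "c2 \<ge> 0" and t: "t > 0" "t \<le> 1/32" "2*t*c2 \<le> lam/32"
    and nn: "Fe \<ge> 0" "Ge \<ge> 0" "Fw \<ge> 0" "Gw \<ge> 0" "F + G \<ge> 0"
    and I1: "(1-t)*Ge + (1-1/t)*Gw \<le> G"
    and I2: "F \<le> (1+t)*Fe + (1+1/t)*Fw"
    and I3: "F + G \<le> (1+t)*(Fe+Ge) + (1+1/t)*(Fw+Gw)"
    and C: "lam*(Fe+Ge) \<le> c1*Ge - c2*Fe"
    and W: "(lam*(1+1/t) + (c1/t + c2*(1+1/t)))*(Fw+Gw) \<le> lam/8*(F+G)"
  shows "3*lam/4*(F+G) \<le> c1*G - c2*F"
proof -
  define W where "W = Fw + Gw"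
  define Ne where "Ne = Fe + Ge"
  define N where "N = F + G"
  define K1 where "K1 = c1/t + c2*(1+1/t)"
  have W0: "W \<ge> 0" using nn by (simp add: W_def)
  have Ne0: "Ne \<ge> 0" using nn by (simp add: Ne_def)
  have it: "1/t > 0" using t by simp
  have s1: "c1*((1-t)*Ge + (1-1/t)*Gw) \<le> c1*G" by (rule mult_left_mono[OF I1 c1])
  have s2: "c2*F \<le> c2*((1+t)*Fe + (1+1/t)*Fw)" by (rule mult_left_mono[OF I2 c2])
  have s3: "c1*(1-1/t)*Gw \<ge> -(c1/t)*W"
  proof -
    have "c1*(1-1/t)*Gw = c1*Gw - (c1/t)*Gw" by (simp add: algebra_simps)
    moreover have "c1*Gw \<ge> 0" using c1 nn by simp
    moreover have "(c1/t)*Gw \<le> (c1/t)*W" using c1 t nn by (intro mult_left_mono) (auto simp: W_def)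
    ultimately show ?thesis by linarith
  qed
  have s4: "c2*(1+1/t)*Fw \<le> c2*(1+1/t)*W"
    using c2 it nn by (intro mult_left_mono) (auto simp: W_def)
  have s5: "c1*G - c2*F \<ge> c1*(1-t)*Ge - c2*(1+t)*Fe - K1*W"
  proof -
    have "c1*G \<ge> c1*(1-t)*Ge + c1*(1-1/t)*Gw" using s1 by (simp add: algebra_simps)
    moreover have "c2*F \<le> c2*(1+t)*Fe + c2*(1+1/t)*Fw" using s2 by (simp add: algebra_simps)
    moreover have "K1*W = (c1/t)*W + c2*(1+1/t)*W" by (simp add: K1_def algebra_simps)
    ultimately show ?thesis using s3 s4 by linarith
  qed
  have s6: "c1*(1-t)*Ge - c2*(1+t)*Fe = (1-t)*(c1*Ge - c2*Fe) - 2*t*c2*Fe" by (simp add: algebra_simps)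
  have s7: "(1-t)*(lam*Ne) \<le> (1-t)*(c1*Ge - c2*Fe)"
    using C t by (intro mult_left_mono) (auto simp: Ne_def)
  have s8: "2*t*c2*Fe \<le> (lam/32)*Ne"
    using t c2 nn lam by (intro mult_mono) (auto simp: Ne_def)
  have s9: "(31/32)*(lam*Ne) \<le> (1-t)*(lam*Ne)"
    using t lam Ne0 by (intro mult_right_mono) auto
  have s10: "(15/16)*lam*Ne \<le> c1*(1-t)*Ge - c2*(1+t)*Fe"
    using s6 s7 s8 s9 by (simp add: algebra_simps; linarith)
  have s11: "(1+t)*Ne \<le> (33/32)*Ne" using t Ne0 by (intro mult_right_mono) auto
  have s12: "N - (1+1/t)*W \<le> (33/32)*Ne" using I3 s11 by (simp add: N_def Ne_def W_def)
  have s13: "(10/11)*lam*(N - (1+1/t)*W) \<le> (15/16)*lam*Ne"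
  proof -
    have "(10/11)*lam*(N - (1+1/t)*W) \<le> (10/11)*lam*((33/32)*Ne)"
      using s12 lam by (intro mult_left_mono) auto
    also have "\<dots> = (15/16)*lam*Ne" by simp
    finally show ?thesis .
  qed
  have s14: "(10/11)*lam*((1+1/t)*W) \<le> lam*((1+1/t)*W)"
    using lam it W0 by (intro mult_right_mono) auto
  have s15: "(lam*(1+1/t) + K1)*W \<le> lam/8*N" using W by (simp add: K1_def W_def N_def)
  have "c1*G - c2*F \<ge> (10/11)*lam*N - (lam*(1+1/t) + K1)*W"
    using s5 s10 s13 s14 by (simp add: algebra_simps; linarith)
  then have "c1*G - c2*F \<ge> (10/11)*lam*N - lam/8*N" using s15 by linarith
  moreover have "(10/11)*lam*N - lam/8*N \<ge> 3*lam/4*N"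
  proof -
    have "(10/11)*lam*N - lam/8*N - 3*lam/4*N = (3/88) * (lam * N)" by (simp add: algebra_simps)
    moreover have "lam * N \<ge> 0" using lam nn by (simp add: N_def)
    ultimately show ?thesis by linarith
  qed
  ultimately show ?thesis by (simp add: N_def)
qed

lemma div_inner: "L2inner f (\<lambda>x. h x / c) = L2inner f h / c"
  unfolding L2inner_def by (simp add: times_divide_eq_right)

lemma L2norm_nonneg: "L2norm h \<ge> 0"
  unfolding L2norm_def by (simp add: integral_nonneg_AE)

lemma inner_bound:
  assumes hm: "h \<in> borel_measurable lborel" and hi: "integrable lborel (\<lambda>x. (h x)\<^sup>2)"
  shows "\<bar>L2inner f h\<bar> \<le> L2norm h * \<bar>L2inner f (\<lambda>x. h x / L2norm h)\<bar>"
proof (cases "L2norm h = 0")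
  case True
  then show ?thesis using zero_norm[OF hm hi True] by simp
next
  case False
  then have "L2norm h > 0" using L2norm_nonneg[of h] by simp
  then show ?thesis by (simp add: div_inner abs_divide)
qed

theorem lemma2p6:
  fixes b A xs lambda1 :: real
  assumes hb: "b < -1" and hA: "A > 0" and hl: "lambda1 > 0"
    and coerc: "\<And>f g. H1_alpha b A xs f g \<Longrightarrow>
                  L2inner f (dQ b A xs) = 0 \<Longrightarrow>
                  L2inner f (SQ b A xs) = 0 \<Longrightarrow>
                  Lform b A xs f g \<ge> lambda1 * H1a_norm2 b A xs f g"
  shows "\<exists>\<theta>>0. \<forall>f g. H1_alpha b A xs f g \<longrightarrow>
           \<bar>L2inner f (\<lambda>x. SQ b A xs x / L2norm (SQ b A xs))\<bar>
           + \<bar>L2inner f (\<lambda>x. dQ b A xs x / L2norm (dQ b A xs))\<bar>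
             \<le> \<theta> * sqrt (H1a_norm2 b A xs f g) \<longrightarrow>
           Lform b A xs f g \<ge> 3 * lambda1 / 4 * H1a_norm2 b A xs f g"
proof -
  define V where "V = H1_alpha b A xs"
  define l1 where "l1 = (\<lambda>f. L2inner f (dQ b A xs))"
  define l2 where "l2 = (\<lambda>f. L2inner f (SQ b A xs))"
  define N where "N = H1a_norm2 b A xs"
  have "\<exists>K\<ge>0. \<forall>f g. V f g \<longrightarrow> (\<exists>fw gw. V fw gw \<and> l1 fw = l1 f \<and> l2 fw = l2 f \<and>
            N fw gw \<le> K * (\<bar>l1 f\<bar> + \<bar>l2 f\<bar>)\<^sup>2)"
  proof (rule correction_abstract)
    show "V (\<lambda>x. a * f1 x + c * f2 x) (\<lambda>x. a * g1 x + c * g2 x)" if "V f1 g1" "V f2 g2" for f1 g1 f2 g2 a c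
      using H1_lin that unfolding V_def by blast
    show "l1 (\<lambda>x. a * f1 x + c * f2 x) = a * l1 f1 + c * l1 f2" if "V f1 g1" "V f2 g2" for f1 g1 f2 g2 a c
      using L2inner_lin[OF l_int(1)[OF hb hA that(1)[unfolded V_def]] l_int(1)[OF hb hA that(2)[unfolded V_def]]]
      unfolding l1_def by blast
    show "l2 (\<lambda>x. a * f1 x + c * f2 x) = a * l2 f1 + c * l2 f2" if "V f1 g1" "V f2 g2" for f1 g1 f2 g2 a c
      using L2inner_lin[OF l_int(2)[OF hb hA that(1)[unfolded V_def]] l_int(2)[OF hb hA that(2)[unfolded V_def]]]
      unfolding l2_def by blast
    show "N (\<lambda>x. a * f1 x + c * f2 x) (\<lambda>x. a * g1 x + c * g2 x) \<le> 2 * a\<^sup>2 * N f1 g1 + 2 * c\<^sup>2 * N f2 g2"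
      if "V f1 g1" "V f2 g2" for f1 g1 f2 g2 a c
      using N_lin that unfolding V_def N_def by blast
    show "N f g \<ge> 0" for f g unfolding N_def by (rule N_pos)
    show "V (\<lambda>_. 0) (\<lambda>_. 0)" unfolding V_def by (rule H1_zero)
    show "N (\<lambda>_. 0) (\<lambda>_. 0) = 0" unfolding N_def H1a_norm2_def by simp
  qed
  then obtain K where K0: "K \<ge> 0" and KP: "\<And>f g. V f g \<Longrightarrow> (\<exists>fw gw. V fw gw \<and> l1 fw = l1 f \<and> l2 fw = l2 f \<and>
            N fw gw \<le> K * (\<bar>l1 f\<bar> + \<bar>l2 f\<bar>)\<^sup>2)" by blast
  define c1 where "c1 = 2 * kc b A / b\<^sup>2"
  define c2 where "c2 = 2 * kc b A * (b + 1) / b"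
  have kc0: "kc b A \<ge> 0" by (simp add: kc_def)
  have c1: "c1 \<ge> 0" using kc0 by (simp add: c1_def)
  have c2: "c2 \<ge> 0"
  proof -
    have "2 * kc b A * (b + 1) \<le> 0" using kc0 hb by (simp add: mult_nonneg_nonpos)
    then show ?thesis unfolding c2_def using hb by (simp add: divide_nonpos_neg)
  qed
  define t where "t = min (1/32) (lambda1 / (64 * (c2 + 1)))"
  have t0: "t > 0" using hl c2 by (simp add: t_def)
  have t1: "t \<le> 1/32" unfolding t_def by (rule min.cobounded1)
  have t2: "2 * t * c2 \<le> lambda1 / 32"
  proof -
    have "t \<le> lambda1 / (64 * (c2 + 1))" unfolding t_def by (rule min.cobounded2)
    then have "t * (64 * (c2 + 1)) \<le> lambda1" using c2 by (simp add: pos_le_divide_eq)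
    then show ?thesis using t0 c2 by (simp add: algebra_simps)
  qed
  define K2 where "K2 = lambda1 * (1 + 1/t) + (c1/t + c2 * (1 + 1/t))"
  have K2: "K2 > 0" using hl t0 c1 c2 by (simp add: K2_def add_pos_nonneg)
  define M where "M = L2norm (SQ b A xs) + L2norm (dQ b A xs)"
  have M0: "M \<ge> 0" by (simp add: M_def L2norm_nonneg add_nonneg_nonneg)
  define D where "D = K2 * (K * M\<^sup>2 + 1)"
  have D0: "D > 0" using K2 K0 by (simp add: D_def add_nonneg_pos)
  have KD: "K2 * K * M\<^sup>2 \<le> D" using K2 by (simp add: D_def algebra_simps)
  define \<theta> where "\<theta> = sqrt (lambda1 / (8 * D))"
  have th0: "\<theta> > 0" using hl D0 by (simp add: \<theta>_def)
  have th2: "\<theta>\<^sup>2 = lambda1 / (8 * D)" using hl D0 by (simp add: \<theta>_def)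
  show ?thesis
  proof (intro exI[of _ \<theta>] conjI th0 allI impI)
    fix f g
    assume H: "H1_alpha b A xs f g"
    assume hyp: "\<bar>L2inner f (\<lambda>x. SQ b A xs x / L2norm (SQ b A xs))\<bar>
           + \<bar>L2inner f (\<lambda>x. dQ b A xs x / L2norm (dQ b A xs))\<bar>
             \<le> \<theta> * sqrt (H1a_norm2 b A xs f g)"
    obtain fw gw where Hw: "H1_alpha b A xs fw gw" and e1: "l1 fw = l1 f" and e2: "l2 fw = l2 f"
      and Nw: "N fw gw \<le> K * (\<bar>l1 f\<bar> + \<bar>l2 f\<bar>)\<^sup>2"
      using KP[of f g] H unfolding V_def by blast
    define fe where "fe = (\<lambda>x. f x - fw x)"
    define ge where "ge = (\<lambda>x. g x - gw x)"
    have He: "H1_alpha b A xs fe ge"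
      using H1_lin[OF H Hw, of 1 "-1"] by (simp add: fe_def ge_def)
    have le1: "L2inner fe (dQ b A xs) = 0"
    proof -
      have "L2inner fe (dQ b A xs) = 1 * l1 f + (-1) * l1 fw" unfolding l1_def fe_def
        using L2inner_lin[OF l_int(1)[OF hb hA H] l_int(1)[OF hb hA Hw], of 1 "-1"] by simp
      then show ?thesis using e1 by simp
    qed
    have le2: "L2inner fe (SQ b A xs) = 0"
    proof -
      have "L2inner fe (SQ b A xs) = 1 * l2 f + (-1) * l2 fw" unfolding l2_def fe_def
        using L2inner_lin[OF l_int(2)[OF hb hA H] l_int(2)[OF hb hA Hw], of 1 "-1"] by simp
      then show ?thesis using e2 by simp
    qed
    have Ce: "Lform b A xs fe ge \<ge> lambda1 * H1a_norm2 b A xs fe ge" by (rule coerc[OF He le1 le2])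
    define al where "al = alpha b A xs"
    define F where "F = (\<integral>x. (f x)\<^sup>2 * al x \<partial>lborel)"
    define G where "G = (\<integral>x. (g x)\<^sup>2 * al x \<partial>lborel)"
    define Fe where "Fe = (\<integral>x. (fe x)\<^sup>2 * al x \<partial>lborel)"
    define Ge where "Ge = (\<integral>x. (ge x)\<^sup>2 * al x \<partial>lborel)"
    define Fw where "Fw = (\<integral>x. (fw x)\<^sup>2 * al x \<partial>lborel)"
    define Gw where "Gw = (\<integral>x. (gw x)\<^sup>2 * al x \<partial>lborel)"
    note sp = N_split[OF H, folded al_def] 
    note spe = N_split[OF He, folded al_def]
    note spw = N_split[OF Hw, folded al_def]
    have alnn: "\<And>x. al x \<ge> 0" by (simp add: al_def alpha_nonneg)
    have NN: "H1a_norm2 b A xs f g = F + G" using sp(3) by (simp add: F_def G_def)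
    have NNe: "H1a_norm2 b A xs fe ge = Fe + Ge" using spe(3) by (simp add: Fe_def Ge_def)
    have NNw: "H1a_norm2 b A xs fw gw = Fw + Gw" using spw(3) by (simp add: Fw_def Gw_def)
    have nn: "Fe \<ge> 0" "Ge \<ge> 0" "Fw \<ge> 0" "Gw \<ge> 0" "F + G \<ge> 0"
      unfolding Fe_def Ge_def Fw_def Gw_def F_def G_def
      by (auto intro!: integral_nonneg_AE add_nonneg_nonneg simp: alnn)
    have I1: "(1-t)*Ge + (1-1/t)*Gw \<le> G"
      unfolding Ge_def Gw_def G_def
      by (rule int_lo[OF t0 spe(2) spw(2) sp(2) _ alnn]) (simp add: ge_def)
    have I2: "F \<le> (1+t)*Fe + (1+1/t)*Fw"
      unfolding Fe_def Fw_def F_def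
      by (rule int_hi[OF t0 spe(1) spw(1) sp(1) _ alnn]) (simp add: fe_def)
    have I3': "G \<le> (1+t)*Ge + (1+1/t)*Gw"
      unfolding Ge_def Gw_def G_def
      by (rule int_hi[OF t0 spe(2) spw(2) sp(2) _ alnn]) (simp add: ge_def)
    have I3: "F + G \<le> (1+t)*(Fe+Ge) + (1+1/t)*(Fw+Gw)" using I2 I3' by (simp add: algebra_simps add_divide_distrib)
    have LF: "Lform b A xs f g = c1 * G - c2 * F"
      by (simp add: Lform_def c1_def c2_def G_def F_def al_def)
    have LFe: "Lform b A xs fe ge = c1 * Ge - c2 * Fe"
      by (simp add: Lform_def c1_def c2_def Ge_def Fe_def al_def)
    have C: "lambda1*(Fe+Ge) \<le> c1*Ge - c2*Fe" using Ce LFe NNe by simp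
    define S where "S = \<bar>l1 f\<bar> + \<bar>l2 f\<bar>"
    have S0: "S \<ge> 0" by (simp add: S_def)
    have Nf0: "F + G \<ge> 0" by (rule nn(5))
    have "\<bar>l2 f\<bar> \<le> L2norm (SQ b A xs) * \<bar>L2inner f (\<lambda>x. SQ b A xs x / L2norm (SQ b A xs))\<bar>"
      unfolding l2_def by (rule inner_bound[OF meas_SQ SQ_sq_int[OF hb hA]])
    moreover have "\<bar>l1 f\<bar> \<le> L2norm (dQ b A xs) * \<bar>L2inner f (\<lambda>x. dQ b A xs x / L2norm (dQ b A xs))\<bar>"
      unfolding l1_def by (rule inner_bound[OF meas_dQ[OF hb hA] dQ_sq_int[OF hb hA]])
    moreover have "L2norm (SQ b A xs) * \<bar>L2inner f (\<lambda>x. SQ b A xs x / L2norm (SQ b A xs))\<bar> \<le> M * \<bar>L2inner f (\<lambda>x. SQ b A xs x / L2norm (SQ b A xs))\<bar>"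
      by (rule mult_right_mono) (auto simp: M_def L2norm_nonneg)
    moreover have "L2norm (dQ b A xs) * \<bar>L2inner f (\<lambda>x. dQ b A xs x / L2norm (dQ b A xs))\<bar> \<le> M * \<bar>L2inner f (\<lambda>x. dQ b A xs x / L2norm (dQ b A xs))\<bar>"
      by (rule mult_right_mono) (auto simp: M_def L2norm_nonneg)
    moreover have "M * (\<bar>L2inner f (\<lambda>x. SQ b A xs x / L2norm (SQ b A xs))\<bar> + \<bar>L2inner f (\<lambda>x. dQ b A xs x / L2norm (dQ b A xs))\<bar>)
        \<le> M * (\<theta> * sqrt (F + G))"
      using hyp M0 NN by (intro mult_left_mono) auto
    ultimately have SM: "S \<le> M * (\<theta> * sqrt (F + G))" unfolding S_def by (simp add: algebra_simps)
    then have "S\<^sup>2 \<le> (M * (\<theta> * sqrt (F + G)))\<^sup>2" using S0 by (simp add: power_mono)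
    also have "\<dots> = M\<^sup>2 * \<theta>\<^sup>2 * (F + G)" using Nf0 by (simp add: power_mult_distrib)
    finally have S2: "S\<^sup>2 \<le> M\<^sup>2 * (lambda1 / (8 * D)) * (F + G)" by (simp add: th2)
    have "K2 * (Fw + Gw) \<le> K2 * (K * S\<^sup>2)"
      using Nw NNw K2 by (simp add: N_def S_def)
    also have "\<dots> \<le> K2 * (K * (M\<^sup>2 * (lambda1 / (8 * D)) * (F + G)))"
      using S2 K2 K0 by (intro mult_left_mono) auto
    also have "\<dots> = (K2 * K * M\<^sup>2) * (lambda1 * (F + G) / (8 * D))" by (simp add: algebra_simps)
    also have "\<dots> \<le> D * (lambda1 * (F + G) / (8 * D))"
      using KD hl Nf0 D0 by (intro mult_right_mono) auto
    also have "\<dots> = lambda1 / 8 * (F + G)" using D0 by simp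
    finally have W: "(lambda1*(1+1/t) + (c1/t + c2*(1+1/t)))*(Fw+Gw) \<le> lambda1/8*(F+G)"
      by (simp add: K2_def)
    have "3*lambda1/4*(F+G) \<le> c1*G - c2*F"
      by (rule final_arith[OF hl c1 c2 t0 t1 t2 nn I1 I2 I3 C W])
    then show "Lform b A xs f g \<ge> 3 * lambda1 / 4 * H1a_norm2 b A xs f g"
      using LF NN by simp
  qed
qed

end
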